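(* Assume $k = 1$ and let $A$ be any implementable allocation rule. Among all payment rules that implement $A$ and are ex-post individually rational, the winner-pays-bid payment rule minimizes the variance $\mathrm{Var}(R) = \mathbb E[(R - \mathbb E[R])^2]$ of the revenue $R = \sum_i P_i(\bm v)$.
   Context: Setting: $n$ risk-neutral unit-demand bidders and $k$ identical items, $1 \le k < n$. Bidder $i$ has private value $v_i \in \mathcal V_i = [0,\bar v_i]$, drawn independently across bidders from a distribution $F_i$ with density $f_i > 0$ on $\mathcal V_i$; $\bm v = (v_1,\dots,v_n)$, $\mathcal V = \prod_i \mathcal V_i$. An allocation rule is a measurable map $A : \mathcal V \to \{0,1\}^n$ with $\sum_i A_i(\bm v) \le k$. Its interim allocation is $x_i(v_i) = \mathbb E[A_i(\bm v) \mid v_i]$, and $A$ is called implementable if every $x_i$ is non-decreasing. Its interim payment function is $z_i(v_i) = v_i x_i(v_i) - \int_0^{v_i} x_i(u)\,du$. A payment rule is a measurable map $P : \mathcal V \to [0,\infty)^n$ (payments are non-negative). $P$ implements $A$ if $(A,P)$ is Bayesian incentive compatible, i.e. $\mathbb E[v_i A_i(\bm v) - P_i(\bm v) \mid v_i] \ge \mathbb E[v_i A_i(v_i',\bm v_{-i}) - P_i(v_i',\bm v_{-i}) \mid v_i]$ for all $i, v_i, v_i'$, and satisfies revenue equivalence $\mathbb E[P_i(\bm v) \mid v_i] = z_i(v_i)$ for all $i, v_i$. $P$ is ex-post individually rational if $v_i A_i(\bm v) - P_i(\bm v) \ge 0$ for all $i$ and $\bm v$. The winner-pays-bid (WPB)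 payment rule is $P_i^{\mathrm{WPB}}(\bm v) = b_i^{\mathrm{WPB}}(v_i) A_i(\bm v)$ with $b_i^{\mathrm{WPB}}(v_i) = z_i(v_i)/x_i(v_i)$ when $x_i(v_i) > 0$ and $b_i^{\mathrm{WPB}}(v_i) = 0$ otherwise. *)

theory Defs
  imports "HOL-Probability.Probability"
begin

text \<open>Bidders are indexed by i < n; a valuation profile is a function nat => real
 (extensional outside {..<n}, as in the product measure).  Bidder i's prior has
 density f i on [0, vbar i].\<close>

definition valid_prior :: "nat \<Rightarrow> (nat \<Rightarrow> real) \<Rightarrow> (nat \<Rightarrow> real \<Rightarrow> real) \<Rightarrow> bool" where
  "valid_prior n vbar f \<longleftrightarrow> (\<forall>i<n. 0 < vbar i \<and> f i \<in> borel_measurable borel \<and>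
     (\<forall>x\<in>{0..vbar i}. 0 < f i x) \<and>
     (\<integral>\<^sup>+ x. ennreal (indicator {0..vbar i} x * f i x) \<partial>lborel) = 1)"

definition prior :: "(nat \<Rightarrow> real) \<Rightarrow> (nat \<Rightarrow> real \<Rightarrow> real) \<Rightarrow> nat \<Rightarrow> real measure" where
  "prior vbar f i = density lborel (\<lambda>x. ennreal (indicator {0..vbar i} x * f i x))"

definition profile_measure :: "nat \<Rightarrow> (nat \<Rightarrow> real) \<Rightarrow> (nat \<Rightarrow> real \<Rightarrow> real) \<Rightarrow> (nat \<Rightarrow> real) measure" where
  "profile_measure n vbar f = PiM {..<n} (prior vbar f)"

definition types :: "nat \<Rightarrow> (nat \<Rightarrow> real) \<Rightarrow> (nat \<Rightarrow> real) set" where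
  "types n vbar = PiE {..<n} (\<lambda>i. {0..vbar i})"

text \<open>Interim expectation E[g(v) | v_i = vi]: by independence, integrate over the
 other bidders' values.\<close>
definition interim :: "nat \<Rightarrow> (nat \<Rightarrow> real) \<Rightarrow> (nat \<Rightarrow> real \<Rightarrow> real) \<Rightarrow> nat \<Rightarrow>
    ((nat \<Rightarrow> real) \<Rightarrow> real) \<Rightarrow> real \<Rightarrow> real" where
  "interim n vbar f i g vi = (\<integral> w. g (w(i := vi)) \<partial>PiM ({..<n} - {i}) (prior vbar f))"

definition alloc_rule :: "nat \<Rightarrow> nat \<Rightarrow> (nat \<Rightarrow> real) \<Rightarrow> (nat \<Rightarrow> real \<Rightarrow> real) \<Rightarrow>
    ((nat \<Rightarrow> real) \<Rightarrow> nat \<Rightarrow> real) \<Rightarrow> bool" where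
  "alloc_rule n k vbar f A \<longleftrightarrow>
     (\<forall>i<n. (\<lambda>v. A v i) \<in> borel_measurable (profile_measure n vbar f)) \<and>
     (\<forall>v. \<forall>i<n. A v i \<in> {0, 1}) \<and> (\<forall>v. (\<Sum>i<n. A v i) \<le> real k)"

definition interim_alloc :: "nat \<Rightarrow> (nat \<Rightarrow> real) \<Rightarrow> (nat \<Rightarrow> real \<Rightarrow> real) \<Rightarrow>
    ((nat \<Rightarrow> real) \<Rightarrow> nat \<Rightarrow> real) \<Rightarrow> nat \<Rightarrow> real \<Rightarrow> real" where
  "interim_alloc n vbar f A i = interim n vbar f i (\<lambda>v. A v i)"

definition implementable :: "nat \<Rightarrow> (nat \<Rightarrow> real) \<Rightarrow> (nat \<Rightarrow> real \<Rightarrow> real) \<Rightarrow>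
    ((nat \<Rightarrow> real) \<Rightarrow> nat \<Rightarrow> real) \<Rightarrow> bool" where
  "implementable n vbar f A \<longleftrightarrow> (\<forall>i<n. mono_on {0..vbar i} (interim_alloc n vbar f A i))"

definition interim_payment :: "nat \<Rightarrow> (nat \<Rightarrow> real) \<Rightarrow> (nat \<Rightarrow> real \<Rightarrow> real) \<Rightarrow>
    ((nat \<Rightarrow> real) \<Rightarrow> nat \<Rightarrow> real) \<Rightarrow> nat \<Rightarrow> real \<Rightarrow> real" where
  "interim_payment n vbar f A i vi =
     vi * interim_alloc n vbar f A i vi - integral {0..vi} (interim_alloc n vbar f A i)"

definition payment_rule :: "nat \<Rightarrow> (nat \<Rightarrow> real) \<Rightarrow> (nat \<Rightarrow> real \<Rightarrow> real) \<Rightarrow>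
    ((nat \<Rightarrow> real) \<Rightarrow> nat \<Rightarrow> real) \<Rightarrow> bool" where
  "payment_rule n vbar f P \<longleftrightarrow>
     (\<forall>i<n. (\<lambda>v. P v i) \<in> borel_measurable (profile_measure n vbar f)) \<and>
     (\<forall>v\<in>types n vbar. \<forall>i<n. 0 \<le> P v i)"

text \<open>P implements A: Bayesian incentive compatibility plus revenue equivalence.\<close>
definition implements :: "nat \<Rightarrow> (nat \<Rightarrow> real) \<Rightarrow> (nat \<Rightarrow> real \<Rightarrow> real) \<Rightarrow>
    ((nat \<Rightarrow> real) \<Rightarrow> nat \<Rightarrow> real) \<Rightarrow> ((nat \<Rightarrow> real) \<Rightarrow> nat \<Rightarrow> real) \<Rightarrow> bool" where
  "implements n vbar f A P \<longleftrightarrow>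
     (\<forall>i<n. \<forall>vi\<in>{0..vbar i}. \<forall>vi'\<in>{0..vbar i}.
        interim n vbar f i (\<lambda>v. v i * A v i - P v i) vi \<ge>
        interim n vbar f i (\<lambda>v. v i * A (v(i := vi')) i - P (v(i := vi')) i) vi) \<and>
     (\<forall>i<n. \<forall>vi\<in>{0..vbar i}. interim n vbar f i (\<lambda>v. P v i) vi = interim_payment n vbar f A i vi)"

definition expost_IR :: "nat \<Rightarrow> (nat \<Rightarrow> real) \<Rightarrow>
    ((nat \<Rightarrow> real) \<Rightarrow> nat \<Rightarrow> real) \<Rightarrow> ((nat \<Rightarrow> real) \<Rightarrow> nat \<Rightarrow> real) \<Rightarrow> bool" where
  "expost_IR n vbar A P \<longleftrightarrow> (\<forall>v\<in>types n vbar. \<forall>i<n. 0 \<le> v i * A v i - P v i)"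

definition wpb_bid :: "nat \<Rightarrow> (nat \<Rightarrow> real) \<Rightarrow> (nat \<Rightarrow> real \<Rightarrow> real) \<Rightarrow>
    ((nat \<Rightarrow> real) \<Rightarrow> nat \<Rightarrow> real) \<Rightarrow> nat \<Rightarrow> real \<Rightarrow> real" where
  "wpb_bid n vbar f A i vi =
     (if interim_alloc n vbar f A i vi > 0
      then interim_payment n vbar f A i vi / interim_alloc n vbar f A i vi else 0)"

definition wpb :: "nat \<Rightarrow> (nat \<Rightarrow> real) \<Rightarrow> (nat \<Rightarrow> real \<Rightarrow> real) \<Rightarrow>
    ((nat \<Rightarrow> real) \<Rightarrow> nat \<Rightarrow> real) \<Rightarrow> (nat \<Rightarrow> real) \<Rightarrow> nat \<Rightarrow> real" where
  "wpb n vbar f A v i = wpb_bid n vbar f A i (v i) * A v i"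

definition revenue_variance :: "nat \<Rightarrow> (nat \<Rightarrow> real) \<Rightarrow> (nat \<Rightarrow> real \<Rightarrow> real) \<Rightarrow>
    ((nat \<Rightarrow> real) \<Rightarrow> nat \<Rightarrow> real) \<Rightarrow> real" where
  "revenue_variance n vbar f P =
     (let R = (\<lambda>v. \<Sum>i<n. P v i);
          ER = (\<integral> v. R v \<partial>profile_measure n vbar f)
      in \<integral> v. (R v - ER)\<^sup>2 \<partial>profile_measure n vbar f)"

end

theory Submission
  imports Defs
begin

lemma ra_int:
  fixes x :: "real \<Rightarrow> real"
  assumes xm: "x \<in> borel_measurable borel" and xb: "\<And>t. 0 \<le> x t \<and> x t \<le> 1"
  shows "x integrable_on {a..b}"
proof (rule measurable_bounded_by_integrable_imp_integrable_real[where g="\<lambda>_. 1"])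
  show "x \<in> borel_measurable (lebesgue_on {a..b})"
    using xm by (simp add: measurable_completion measurable_restrict_space1)
qed (use xb in auto)

lemma ra_nonneg:
  fixes x :: "real \<Rightarrow> real"
  assumes xm: "x \<in> borel_measurable borel" and xb: "\<And>t. 0 \<le> x t \<and> x t \<le> 1"
  shows "0 \<le> integral {a..b} x"
  by (rule Henstock_Kurzweil_Integration.integral_nonneg[OF ra_int[OF xm xb]]) (use xb in auto)

lemma ra_mono:
  fixes x :: "real \<Rightarrow> real"
  assumes xm: "x \<in> borel_measurable borel" and xb: "\<And>t. 0 \<le> x t \<and> x t \<le> 1"
  shows "mono (\<lambda>t. integral {0..t} x)"
proof (rule monoI)
  fix s t :: real assume st: "s \<le> t"
  show "integral {0..s} x \<le> integral {0..t} x"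
  proof (cases "s < 0")
    case True
    then have "{0..s} = {}" by auto
    then show ?thesis using ra_nonneg[OF xm xb] by simp
  next
    case False
    show ?thesis
      by (rule integral_subset_le) (use st False xb ra_int[OF xm xb] in auto)
  qed
qed

lemma ra_diff:
  fixes x :: "real \<Rightarrow> real"
  assumes xm: "x \<in> borel_measurable borel" and xb: "\<And>t. 0 \<le> x t \<and> x t \<le> 1"
    and "0 \<le> a" "a \<le> b"
  shows "integral {0..b} x - integral {0..a} x = integral {a..b} x"
  using Henstock_Kurzweil_Integration.integral_combine[where a=0 and c=a and b=b and f=x, OF _ _ ra_int[OF xm xb]] ra_int[OF xm xb] assms by auto

lemma ra_lower:
  fixes x :: "real \<Rightarrow> real"
  assumes xm: "x \<in> borel_measurable borel" and xb: "\<And>t. 0 \<le> x t \<and> x t \<le> 1"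
    and mono: "mono_on {0..V} x" and "0 \<le> a" "a \<le> b" "b \<le> V"
  shows "(b - a) * x a \<le> integral {a..b} x"
proof -
  have "integral {a..b} (\<lambda>_. x a) \<le> integral {a..b} x"
    by (rule integral_le) (use ra_int[OF xm xb] assms in \<open>auto intro: mono_onD[OF mono]\<close>)
  then show ?thesis using assms by simp
qed

lemma ra_upper:
  fixes x :: "real \<Rightarrow> real"
  assumes xm: "x \<in> borel_measurable borel" and xb: "\<And>t. 0 \<le> x t \<and> x t \<le> 1"
    and mono: "mono_on {0..V} x" and "0 \<le> a" "a \<le> b" "b \<le> V"
  shows "integral {a..b} x \<le> (b - a) * x b"
proof -
  have "integral {a..b} x \<le> integral {a..b} (\<lambda>_. x b)"
    by (rule integral_le) (use ra_int[OF xm xb] assms in \<open>auto intro: mono_onD[OF mono]\<close>)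
  then show ?thesis using assms by simp
qed


locale auc =
  fixes n :: nat and vbar :: "nat \<Rightarrow> real" and f :: "nat \<Rightarrow> real \<Rightarrow> real"
    and A :: "(nat \<Rightarrow> real) \<Rightarrow> nat \<Rightarrow> real"
  assumes n1: "1 < n" and vp: "valid_prior n vbar f" and al: "alloc_rule n 1 vbar f A"
    and imp: "implementable n vbar f A"
begin

lemma space_prior[simp]: "space (prior vbar f i) = UNIV"
  by (simp add: prior_def)

lemma sets_prior[simp, measurable_cong]: "sets (prior vbar f i) = sets borel"
  by (simp add: prior_def)

lemma prior_prob: "i < n \<Longrightarrow> prob_space (prior vbar f i)"
proof -
  assume i: "i < n"
  have fm: "f i \<in> borel_measurable borel" using vp i by (simp add: valid_prior_def)
  have "emeasure (prior vbar f i) UNIV = (\<integral>\<^sup>+ x. ennreal (indicator {0..vbar i} x * f i x) \<partial>lborel)"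
    unfolding prior_def using fm by (subst emeasure_density) auto
  also have "\<dots> = 1" using vp i by (simp add: valid_prior_def)
  finally show ?thesis by (intro prob_spaceI) simp
qed

definition Q :: "nat \<Rightarrow> real measure" where
  "Q i = (if i < n then prior vbar f i else return borel 0)"

lemma Q_prob: "prob_space (Q i)"
  by (auto simp: Q_def prior_prob intro: prob_space_return)

lemma PPS: "product_prob_space Q"
  unfolding product_prob_space_def product_prob_space_axioms_def product_sigma_finite_def
  using Q_prob by (auto intro: prob_space_imp_sigma_finite)

lemma PiM_Q: "J \<subseteq> {..<n} \<Longrightarrow> PiM J (prior vbar f) = PiM J Q"
  by (rule PiM_cong) (auto simp: Q_def)

lemma AE_range: "i < n \<Longrightarrow> AE y in prior vbar f i. y \<in> {0..vbar i}"
proof -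
  assume i: "i < n"
  have fm: "f i \<in> borel_measurable borel" using vp i by (simp add: valid_prior_def)
  show ?thesis unfolding prior_def using fm
    by (subst AE_density) (auto intro!: AE_I2 simp: indicator_def)
qed

lemma AE_prod: "J \<subseteq> {..<n} \<Longrightarrow> AE w in PiM J (prior vbar f). \<forall>j\<in>J. w j \<in> {0..vbar j}"
proof -
  assume J: "J \<subseteq> {..<n}"
  interpret product_prob_space Q J by (rule PPS)
  have fin: "finite J" using J finite_subset by blast
  show ?thesis unfolding PiM_Q[OF J]
  proof (rule AE_finite_allI[OF fin])
    fix j assume j: "j \<in> J"
    have "j < n" using j J by auto
    then have "Q j = prior vbar f j" by (simp add: Q_def)
    then have "AE y in Q j. y \<in> {0..vbar j}" using AE_range[of j] \<open>j < n\<close> by metis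
    then show "AE w in PiM J Q. w j \<in> {0..vbar j}" by (rule AE_component[OF j])
  qed
qed

abbreviation "PM \<equiv> profile_measure n vbar f"
abbreviation "Oth i \<equiv> PiM ({..<n} - {i}) (prior vbar f)"

lemma PM_prob: "prob_space PM"
  unfolding profile_measure_def by (rule prob_space_PiM) (auto intro: prior_prob)

lemma Oth_prob: "prob_space (Oth i)"
  by (rule prob_space_PiM) (auto intro: prior_prob)

lemma upd_meas: "i < n \<Longrightarrow> (\<lambda>w. w(i:=y)) \<in> measurable (Oth i) PM"
  unfolding profile_measure_def
  by (rule measurable_fun_upd[where J="{..<n}-{i}"]) auto

lemma upd_comp: "i < n \<Longrightarrow> g \<in> borel_measurable PM \<Longrightarrow> (\<lambda>w. g (w(i:=y))) \<in> borel_measurable (Oth i)"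
  using measurable_comp[OF upd_meas] by (auto simp: comp_def)

lemma AE_types_upd:
  assumes i: "i < n" and y: "y \<in> {0..vbar i}"
  shows "AE w in Oth i. w(i:=y) \<in> types n vbar"
proof -
  have "AE w in Oth i. \<forall>j\<in>{..<n}-{i}. w j \<in> {0..vbar j}" by (rule AE_prod) auto
  moreover have "AE w in Oth i. w \<in> space (Oth i)" by (rule AE_space)
  ultimately show ?thesis
  proof eventually_elim
    case (elim w)
    then show ?case using i y
      by (auto simp: types_def space_PiM PiE_iff extensional_def)
  qed
qed

lemma AE_types: "AE v in PM. v \<in> types n vbar"
proof -
  have "AE w in PM. \<forall>j\<in>{..<n}. w j \<in> {0..vbar j}" unfolding profile_measure_def by (rule AE_prod) auto
  moreover have "AE w in PM. w \<in> space PM" by (rule AE_space)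
  ultimately show ?thesis
  proof eventually_elim
    case (elim w)
    then show ?case 
      by (auto simp: types_def space_PiM PiE_iff extensional_def profile_measure_def)
  qed
qed

lemma interim_bound:
  assumes i: "i < n" and y: "y \<in> {0..vbar i}" and g: "g \<in> borel_measurable PM"
    and gb: "\<And>v. v \<in> types n vbar \<Longrightarrow> 0 \<le> g v \<and> g v \<le> B"
  shows "integrable (Oth i) (\<lambda>w. g (w(i:=y)))" "0 \<le> interim n vbar f i g y" "interim n vbar f i g y \<le> B"
proof -
  interpret O: prob_space "Oth i" by (rule Oth_prob)
  have ae: "AE w in Oth i. 0 \<le> g (w(i:=y)) \<and> g (w(i:=y)) \<le> B"
    using AE_types_upd[OF i y] by eventually_elim (use gb in auto)
  show int: "integrable (Oth i) (\<lambda>w. g (w(i:=y)))"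
    by (rule O.integrable_const_bound[where B=B]) (use ae upd_comp[OF i g] in auto)
  show "0 \<le> interim n vbar f i g y" unfolding interim_def
    by (rule integral_nonneg_AE) (use ae in auto)
  have "interim n vbar f i g y \<le> (\<integral>w. B \<partial>Oth i)" unfolding interim_def
    by (rule integral_mono_AE) (use ae int in auto)
  then show "interim n vbar f i g y \<le> B" by (simp add: O.prob_space)
qed

lemma interim_meas:
  assumes i: "i < n" and g: "g \<in> borel_measurable PM"
  shows "interim n vbar f i g \<in> borel_measurable borel"
proof -
  interpret O: prob_space "Oth i" by (rule Oth_prob)
  have m: "(\<lambda>p. (snd p)(i := fst p)) \<in> measurable (borel \<Otimes>\<^sub>M Oth i) PM"
    unfolding profile_measure_def
    by (rule measurable_fun_upd[where J="{..<n}-{i}"]) (use i in auto)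
  have "(\<lambda>p. g ((snd p)(i := fst p))) \<in> borel_measurable (borel \<Otimes>\<^sub>M Oth i)"
    using measurable_comp[OF m g] by (simp add: comp_def)
  then have "case_prod (\<lambda>y w. g (w(i:=y))) \<in> borel_measurable (borel \<Otimes>\<^sub>M Oth i)"
    by (simp add: case_prod_beta')
  then show ?thesis unfolding interim_def
    by (rule O.borel_measurable_lebesgue_integral)
qed

lemma decomp:
  assumes i: "i < n" and g: "g \<in> borel_measurable PM"
    and gb: "\<And>v. v \<in> types n vbar \<Longrightarrow> 0 \<le> g v \<and> g v \<le> B"
  shows "integral\<^sup>L PM g = (\<integral>y. interim n vbar f i g y \<partial>prior vbar f i)"
proof -
  interpret P: product_prob_space Q "{..<n}" by (rule PPS)
  have ins: "insert i ({..<n}-{i}) = {..<n}" using i by auto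
  have PMQ: "PM = PiM (insert i ({..<n}-{i})) Q" unfolding profile_measure_def ins by (rule PiM_Q) auto
  have OQ: "Oth i = PiM ({..<n}-{i}) Q" by (rule PiM_Q) auto
  have Qi: "Q i = prior vbar f i" using i by (simp add: Q_def)
  have gQ: "g \<in> borel_measurable (PiM (insert i ({..<n}-{i})) Q)" using g PMQ by simp
  have "integral\<^sup>L PM g = enn2real (\<integral>\<^sup>+ v. ennreal (g v) \<partial>PM)"
    by (rule integral_eq_nn_integral[OF g]) (use AE_types in \<open>eventually_elim, use gb in auto\<close>)
  also have "(\<integral>\<^sup>+ v. ennreal (g v) \<partial>PM) =
      (\<integral>\<^sup>+ y. (\<integral>\<^sup>+ w. ennreal (g (w(i:=y))) \<partial>PiM ({..<n}-{i}) Q) \<partial>Q i)"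
    unfolding PMQ by (rule P.product_nn_integral_insert_rev) (use gQ in auto)
  also have "\<dots> = (\<integral>\<^sup>+ y. ennreal (interim n vbar f i g y) \<partial>prior vbar f i)"
    unfolding Qi OQ[symmetric]
  proof (rule nn_integral_cong_AE)
    show "AE y in prior vbar f i. (\<integral>\<^sup>+ w. ennreal (g (w(i:=y))) \<partial>Oth i) = ennreal (interim n vbar f i g y)"
      using AE_range[OF i]
    proof eventually_elim
      case (elim y)
      have "AE w in Oth i. 0 \<le> g (w(i:=y))"
        using AE_types_upd[OF i elim] by eventually_elim (use gb in auto)
      then show ?case unfolding interim_def
        using nn_integral_eq_integral[OF interim_bound(1)[OF i elim g gb]] by simp
    qed
  qed
  also have "enn2real \<dots> = (\<integral>y. interim n vbar f i g y \<partial>prior vbar f i)"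
  proof (rule integral_eq_nn_integral[symmetric])
    show "interim n vbar f i g \<in> borel_measurable (prior vbar f i)"
      using interim_meas[OF i g] by (simp cong: measurable_cong_sets)
    show "AE x in prior vbar f i. 0 \<le> interim n vbar f i g x"
      using AE_range[OF i] by eventually_elim (rule interim_bound(2)[OF i _ g gb])
  qed
  finally show ?thesis .
qed

lemma A_meas: "i < n \<Longrightarrow> (\<lambda>v. A v i) \<in> borel_measurable PM"
  using al by (simp add: alloc_rule_def)

lemma A01: "i < n \<Longrightarrow> A v i = 0 \<or> A v i = 1"
  using al by (simp add: alloc_rule_def)

lemma Asum: "(\<Sum>i<n. A v i) \<le> 1"
  using al by (simp add: alloc_rule_def)

lemma x_bound:
  assumes i: "i < n"
  shows "0 \<le> interim_alloc n vbar f A i t \<and> interim_alloc n vbar f A i t \<le> 1"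
proof -
  interpret O: prob_space "Oth i" by (rule Oth_prob)
  have b: "0 \<le> A (w(i:=t)) i \<and> A (w(i:=t)) i \<le> 1" for w using A01[OF i, of "w(i:=t)"] by auto
  have int: "integrable (Oth i) (\<lambda>w. A (w(i:=t)) i)"
    by (rule O.integrable_const_bound[where B=1]) (use b upd_comp[OF i A_meas[OF i]] in auto)
  have "0 \<le> (\<integral>w. A (w(i:=t)) i \<partial>Oth i)" by (rule integral_nonneg_AE) (use b in auto)
  moreover have "(\<integral>w. A (w(i:=t)) i \<partial>Oth i) \<le> (\<integral>w. 1 \<partial>Oth i)"
    by (rule integral_mono) (use b int in auto)
  ultimately show ?thesis by (simp add: interim_alloc_def interim_def O.prob_space)
qed

lemma x_meas: "i < n \<Longrightarrow> interim_alloc n vbar f A i \<in> borel_measurable borel"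
  unfolding interim_alloc_def by (rule interim_meas[OF _ A_meas])

lemma x_mono: "i < n \<Longrightarrow> mono_on {0..vbar i} (interim_alloc n vbar f A i)"
  using imp by (simp add: implementable_def)

lemma F_nonneg: "i < n \<Longrightarrow> 0 \<le> integral {0..y} (interim_alloc n vbar f A i)"
  by (rule ra_nonneg[OF x_meas x_bound])

lemma F_le: "i < n \<Longrightarrow> y \<in> {0..vbar i} \<Longrightarrow>
    integral {0..y} (interim_alloc n vbar f A i) \<le> y * interim_alloc n vbar f A i y"
  using ra_upper[OF x_meas x_bound x_mono, of i 0 y] by auto

lemma bid_eq: "i < n \<Longrightarrow> y \<in> {0..vbar i} \<Longrightarrow>
    wpb_bid n vbar f A i y * interim_alloc n vbar f A i y = interim_payment n vbar f A i y"
proof -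
  assume i: "i < n" and y: "y \<in> {0..vbar i}"
  show ?thesis
  proof (cases "interim_alloc n vbar f A i y > 0")
    case True then show ?thesis by (simp add: wpb_bid_def)
  next
    case False
    then have "interim_alloc n vbar f A i y = 0" using x_bound[OF i, of y] by linarith
    then show ?thesis using F_le[OF i y] F_nonneg[OF i, of y]
      by (simp add: wpb_bid_def interim_payment_def)
  qed
qed

lemma bid_nonneg: "i < n \<Longrightarrow> y \<in> {0..vbar i} \<Longrightarrow> 0 \<le> wpb_bid n vbar f A i y"
  using F_le[of i y] by (auto simp: wpb_bid_def interim_payment_def)

lemma bid_le: "i < n \<Longrightarrow> wpb_bid n vbar f A i y \<le> max 0 y"
proof -
  assume i: "i < n"
  show ?thesis
  proof (cases "interim_alloc n vbar f A i y > 0")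
    case True
    then have "(y * interim_alloc n vbar f A i y - integral {0..y} (interim_alloc n vbar f A i)) 
        / interim_alloc n vbar f A i y \<le> y"
      using F_nonneg[OF i, of y] by (simp add: divide_le_eq)
    then show ?thesis using True by (simp add: wpb_bid_def interim_payment_def)
  qed (simp add: wpb_bid_def)
qed

lemma bid_meas: "i < n \<Longrightarrow> wpb_bid n vbar f A i \<in> borel_measurable borel"
proof -
  assume i: "i < n"
  note xm[measurable] = x_meas[OF i]
  have Fm[measurable]: "(\<lambda>t. integral {0..t} (interim_alloc n vbar f A i)) \<in> borel_measurable borel"
    by (rule borel_measurable_mono[OF ra_mono[OF x_meas[OF i] x_bound[OF i]]])
  show ?thesis unfolding wpb_bid_def[abs_def] interim_payment_def by measurable
qed

lemma comp_meas: "i < n \<Longrightarrow> (\<lambda>v. v i) \<in> borel_measurable PM"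
  unfolding profile_measure_def
  using measurable_component_singleton[of i "{..<n}" "prior vbar f"]
  by (simp cong: measurable_cong_sets)

lemma wpb_meas: "i < n \<Longrightarrow> (\<lambda>v. wpb n vbar f A v i) \<in> borel_measurable PM"
proof -
  assume i: "i < n"
  note [measurable] = comp_meas[OF i] A_meas[OF i] bid_meas[OF i]
  show ?thesis unfolding wpb_def by measurable
qed

lemma types_range: "v \<in> types n vbar \<Longrightarrow> i < n \<Longrightarrow> v i \<in> {0..vbar i}"
  by (auto simp: types_def PiE_iff)

lemma wpb_bounds: "v \<in> types n vbar \<Longrightarrow> i < n \<Longrightarrow>
    0 \<le> wpb n vbar f A v i \<and> wpb n vbar f A v i \<le> v i * A v i"
  using types_range[of v i] bid_nonneg[of i "v i"] bid_le[of i "v i"] A01[of i v]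
  by (auto simp: wpb_def)

lemma interim_wpb: "i < n \<Longrightarrow>
    interim n vbar f i (\<lambda>v. wpb n vbar f A v i) y = wpb_bid n vbar f A i y * interim_alloc n vbar f A i y"
  by (simp add: interim_def interim_alloc_def wpb_def)

lemma interim_lin: "interim n vbar f i (\<lambda>v. c * A v i - d * A v i) y = (c - d) * interim_alloc n vbar f A i y"
proof -
  have "interim n vbar f i (\<lambda>v. c * A v i - d * A v i) y = (\<integral>w. (c - d) * A (w(i:=y)) i \<partial>Oth i)"
    unfolding interim_def by (rule Bochner_Integration.integral_cong[OF refl]) (auto simp: algebra_simps)
  then show ?thesis by (simp add: interim_alloc_def interim_def)
qed

lemma wpb_BIC:
  assumes i: "i < n" and y: "y \<in> {0..vbar i}" and y': "y' \<in> {0..vbar i}"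
  shows "interim n vbar f i (\<lambda>v. v i * A v i - wpb n vbar f A v i) y \<ge>
        interim n vbar f i (\<lambda>v. v i * A (v(i := y')) i - wpb n vbar f A (v(i := y')) i) y"
proof -
  let ?x = "interim_alloc n vbar f A i" and ?b = "wpb_bid n vbar f A i"
  let ?F = "\<lambda>t. integral {0..t} ?x"
  have L: "interim n vbar f i (\<lambda>v. v i * A v i - wpb n vbar f A v i) y = (y - ?b y) * ?x y"
  proof -
    have "interim n vbar f i (\<lambda>v. v i * A v i - wpb n vbar f A v i) y
        = interim n vbar f i (\<lambda>v. y * A v i - ?b y * A v i) y"
      unfolding interim_def by (rule Bochner_Integration.integral_cong[OF refl]) (auto simp: wpb_def)
    then show ?thesis by (simp add: interim_lin)
  qed
  have R: "interim n vbar f i (\<lambda>v. v i * A (v(i := y')) i - wpb n vbar f A (v(i := y')) i) y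
      = (y - ?b y') * ?x y'"
  proof -
    have "interim n vbar f i (\<lambda>v. v i * A (v(i := y')) i - wpb n vbar f A (v(i := y')) i) y
        = interim n vbar f i (\<lambda>v. y * A v i - ?b y' * A v i) y'"
      unfolding interim_def by (rule Bochner_Integration.integral_cong[OF refl]) (auto simp: wpb_def)
    then show ?thesis by (simp add: interim_lin)
  qed
  have Ly: "(y - ?b y) * ?x y = ?F y" using bid_eq[OF i y] by (simp add: interim_payment_def algebra_simps)
  have Ry: "(y - ?b y') * ?x y' = (y - y') * ?x y' + ?F y'"
    using bid_eq[OF i y'] by (simp add: interim_payment_def algebra_simps)
  have key: "(y - y') * ?x y' + ?F y' \<le> ?F y"
  proof (cases "y' \<le> y")
    case True
    have "?F y - ?F y' = integral {y'..y} ?x"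
      by (rule ra_diff[OF x_meas[OF i] x_bound[OF i]]) (use y' True in auto)
    moreover have "(y - y') * ?x y' \<le> integral {y'..y} ?x"
      by (rule ra_lower[OF x_meas[OF i] x_bound[OF i] x_mono[OF i]]) (use y y' True in auto)
    ultimately show ?thesis by linarith
  next
    case False
    have "?F y' - ?F y = integral {y..y'} ?x"
      by (rule ra_diff[OF x_meas[OF i] x_bound[OF i]]) (use y False in auto)
    moreover have "integral {y..y'} ?x \<le> (y' - y) * ?x y'"
      by (rule ra_upper[OF x_meas[OF i] x_bound[OF i] x_mono[OF i]]) (use y y' False in auto)
    ultimately show ?thesis by (simp add: algebra_simps)
  qed
  show ?thesis unfolding L R Ly Ry using key by simp
qed

lemma wpb_props:
  "payment_rule n vbar f (wpb n vbar f A) \<and> implements n vbar f A (wpb n vbar f A) \<and>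
   expost_IR n vbar A (wpb n vbar f A)"
  using wpb_meas wpb_bounds wpb_BIC bid_eq interim_wpb
  by (auto simp: payment_rule_def implements_def expost_IR_def)

definition good :: "((nat \<Rightarrow> real) \<Rightarrow> nat \<Rightarrow> real) \<Rightarrow> bool" where
  "good Pp \<longleftrightarrow> (\<forall>i<n. (\<lambda>v. Pp v i) \<in> borel_measurable PM) \<and>
     (\<forall>v\<in>types n vbar. \<forall>i<n. 0 \<le> Pp v i \<and> Pp v i \<le> v i * A v i) \<and>
     (\<forall>i<n. \<forall>y\<in>{0..vbar i}. interim n vbar f i (\<lambda>v. Pp v i) y = interim_payment n vbar f A i y)"

lemma good_wpb: "good (wpb n vbar f A)"
  using wpb_meas wpb_bounds bid_eq interim_wpb by (auto simp: good_def)

lemma good_P: "payment_rule n vbar f P \<Longrightarrow> implements n vbar f A P \<Longrightarrow> expost_IR n vbar A P \<Longrightarrow> good P"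
  by (auto simp: good_def payment_rule_def implements_def expost_IR_def)

lemma good_meas: "good Pp \<Longrightarrow> i < n \<Longrightarrow> (\<lambda>v. Pp v i) \<in> borel_measurable PM"
  by (simp add: good_def)

lemma good_bound: "good Pp \<Longrightarrow> v \<in> types n vbar \<Longrightarrow> i < n \<Longrightarrow> 0 \<le> Pp v i \<and> Pp v i \<le> vbar i"
proof -
  assume g: "good Pp" and v: "v \<in> types n vbar" and i: "i < n"
  have r: "v i \<in> {0..vbar i}" by (rule types_range[OF v i])
  have "0 \<le> Pp v i \<and> Pp v i \<le> v i * A v i" using g v i by (simp add: good_def)
  then show ?thesis using r A01[OF i, of v] by auto
qed

lemma good_zero: "good Pp \<Longrightarrow> v \<in> types n vbar \<Longrightarrow> i < n \<Longrightarrow> A v i = 0 \<Longrightarrow> Pp v i = 0"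
proof -
  assume g: "good Pp" and v: "v \<in> types n vbar" and i: "i < n" and a: "A v i = 0"
  have "0 \<le> Pp v i \<and> Pp v i \<le> v i * A v i" using g v i by (simp add: good_def)
  then show ?thesis using a by simp
qed

lemma good_RE: "good Pp \<Longrightarrow> i < n \<Longrightarrow> y \<in> {0..vbar i} \<Longrightarrow>
    interim n vbar f i (\<lambda>v. Pp v i) y = interim_payment n vbar f A i y"
  by (simp add: good_def)

lemma other_zero: "j < n \<Longrightarrow> k < n \<Longrightarrow> j \<noteq> k \<Longrightarrow> A v j = 1 \<Longrightarrow> A v k = 0"
proof -
  assume j: "j < n" and k: "k < n" and jk: "j \<noteq> k" and a: "A v j = 1"
  have "(\<Sum>i\<in>{j,k}. A v i) \<le> (\<Sum>i<n. A v i)"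
  proof (rule sum_mono2)
    show "0 \<le> A v b" if "b \<in> {..<n} - {j, k}" for b using A01[of b v] that by auto
  qed (use j k in auto)
  then have "A v j + A v k \<le> 1" using Asum[of v] jk by simp
  then show ?thesis using a A01[OF k, of v] by auto
qed


lemma good_sq_sum:
  assumes g: "good Pp" and v: "v \<in> types n vbar"
  shows "(\<Sum>i<n. Pp v i)\<^sup>2 = (\<Sum>i<n. (Pp v i)\<^sup>2)"
proof (cases "\<exists>j<n. A v j = 1")
  case True
  then obtain j where j: "j < n" "A v j = 1" by auto
  have z: "Pp v k = 0" if "k \<in> {..<n} - {j}" for k
  proof -
    have k: "k < n" "k \<noteq> j" using that by auto
    have "A v k = 0" by (rule other_zero[OF j(1) k(1)]) (use k j in auto)
    then show ?thesis by (rule good_zero[OF g v k(1)])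
  qed
  have jn: "j \<in> {..<n}" using j by simp
  have 1: "(\<Sum>i<n. Pp v i) = Pp v j"
    using sum.remove[OF finite_lessThan jn, of "\<lambda>i. Pp v i"] z by simp
  have 2: "(\<Sum>i<n. (Pp v i)\<^sup>2) = (Pp v j)\<^sup>2"
    using sum.remove[OF finite_lessThan jn, of "\<lambda>i. (Pp v i)\<^sup>2"] z by simp
  show ?thesis using 1 2 by simp
next
  case False
  have "Pp v k = 0" if "k < n" for k
  proof -
    have "A v k = 0" using False A01[OF that, of v] that by auto
    then show ?thesis by (rule good_zero[OF g v that])
  qed
  then show ?thesis by simp
qed

lemma interim_int:
  assumes i: "i < n" and g: "g \<in> borel_measurable PM"
    and gb: "\<And>v. v \<in> types n vbar \<Longrightarrow> 0 \<le> g v \<and> g v \<le> B"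
  shows "integrable (prior vbar f i) (interim n vbar f i g)"
proof -
  interpret P: prob_space "prior vbar f i" by (rule prior_prob[OF i])
  have m: "interim n vbar f i g \<in> borel_measurable (prior vbar f i)"
    using interim_meas[OF i g] by (simp cong: measurable_cong_sets)
  have "AE y in prior vbar f i. norm (interim n vbar f i g y) \<le> B"
    using AE_range[OF i] by eventually_elim (use interim_bound(2,3)[OF i _ g gb] in auto)
  then show ?thesis by (rule P.integrable_const_bound[OF _ m])
qed

lemma good_int: "good Pp \<Longrightarrow> i < n \<Longrightarrow> integrable PM (\<lambda>v. Pp v i)"
proof -
  assume g: "good Pp" and i: "i < n"
  interpret P: prob_space PM by (rule PM_prob)
  have "AE v in PM. norm (Pp v i) \<le> vbar i"
    using AE_types by eventually_elim (use good_bound[OF g _ i] in auto)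
  then show ?thesis by (rule P.integrable_const_bound[OF _ good_meas[OF g i]])
qed

lemma good_int2: "good Pp \<Longrightarrow> i < n \<Longrightarrow> integrable PM (\<lambda>v. (Pp v i)\<^sup>2)"
proof -
  assume g: "good Pp" and i: "i < n"
  interpret P: prob_space PM by (rule PM_prob)
  note [measurable] = good_meas[OF g i]
  have "AE v in PM. norm ((Pp v i)\<^sup>2) \<le> (vbar i)\<^sup>2"
    using AE_types by eventually_elim (use good_bound[OF g _ i] in \<open>auto intro: power_mono\<close>)
  then show ?thesis by (rule P.integrable_const_bound) measurable
qed

lemma good_ER: "good Pp \<Longrightarrow> integral\<^sup>L PM (\<lambda>v. \<Sum>i<n. Pp v i) =
    (\<Sum>i<n. \<integral>y. interim n vbar f i (\<lambda>v. wpb n vbar f A v i) y \<partial>prior vbar f i)"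
proof -
  assume g: "good Pp"
  have "integral\<^sup>L PM (\<lambda>v. \<Sum>i<n. Pp v i) = (\<Sum>i<n. integral\<^sup>L PM (\<lambda>v. Pp v i))"
    by (rule Bochner_Integration.integral_sum[where f="\<lambda>i v. Pp v i"]) (use good_int[OF g] in auto)
  also have "\<dots> = (\<Sum>i<n. \<integral>y. interim n vbar f i (\<lambda>v. wpb n vbar f A v i) y \<partial>prior vbar f i)"
  proof (rule sum.cong[OF refl])
    fix i assume "i \<in> {..<n}" then have i: "i < n" by simp
    have "integral\<^sup>L PM (\<lambda>v. Pp v i) = (\<integral>y. interim n vbar f i (\<lambda>v. Pp v i) y \<partial>prior vbar f i)"
      by (rule decomp[OF i good_meas[OF g i]]) (use good_bound[OF g _ i] in auto)
    also have "\<dots> = (\<integral>y. interim n vbar f i (\<lambda>v. wpb n vbar f A v i) y \<partial>prior vbar f i)"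
    proof (rule integral_cong_AE)
      show "interim n vbar f i (\<lambda>v. Pp v i) \<in> borel_measurable (prior vbar f i)"
        using interim_meas[OF i good_meas[OF g i]] by (simp cong: measurable_cong_sets)
      show "interim n vbar f i (\<lambda>v. wpb n vbar f A v i) \<in> borel_measurable (prior vbar f i)"
        using interim_meas[OF i good_meas[OF good_wpb i]] by (simp cong: measurable_cong_sets)
      show "AE y in prior vbar f i. interim n vbar f i (\<lambda>v. Pp v i) y = interim n vbar f i (\<lambda>v. wpb n vbar f A v i) y"
        using AE_range[OF i] by eventually_elim (simp add: good_RE[OF g i] good_RE[OF good_wpb i])
    qed
    finally show "integral\<^sup>L PM (\<lambda>v. Pp v i) = (\<integral>y. interim n vbar f i (\<lambda>v. wpb n vbar f A v i) y \<partial>prior vbar f i)" .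
  qed
  finally show ?thesis .
qed

lemma good_intR: "good Pp \<Longrightarrow> integrable PM (\<lambda>v. \<Sum>i<n. Pp v i)"
  by (rule Bochner_Integration.integrable_sum[where f="\<lambda>i v. Pp v i"]) (rule good_int, auto)

lemma good_R2_eq: "good Pp \<Longrightarrow> AE v in PM. (\<Sum>i<n. Pp v i)\<^sup>2 = (\<Sum>i<n. (Pp v i)\<^sup>2)"
  using AE_types by eventually_elim (rule good_sq_sum)

lemma good_R2_meas: "good Pp \<Longrightarrow> (\<lambda>v. (\<Sum>i<n. Pp v i)\<^sup>2) \<in> borel_measurable PM"
  by (intro borel_measurable_power borel_measurable_sum) (rule good_meas, auto)

lemma good_intR2: "good Pp \<Longrightarrow> integrable PM (\<lambda>v. (\<Sum>i<n. Pp v i)\<^sup>2)"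
proof -
  assume g: "good Pp"
  have "integrable PM (\<lambda>v. \<Sum>i<n. (Pp v i)\<^sup>2)"
    by (rule Bochner_Integration.integrable_sum[where f="\<lambda>i v. (Pp v i)\<^sup>2"]) (rule good_int2[OF g], auto)
  moreover have "(\<lambda>v. \<Sum>i<n. (Pp v i)\<^sup>2) \<in> borel_measurable PM"
    by (intro borel_measurable_power borel_measurable_sum) (rule good_meas[OF g], auto)
  ultimately show ?thesis using integrable_cong_AE[OF good_R2_meas[OF g] _ good_R2_eq[OF g]] by simp
qed

lemma good_ER2: "good Pp \<Longrightarrow> integral\<^sup>L PM (\<lambda>v. (\<Sum>i<n. Pp v i)\<^sup>2) =
    (\<Sum>i<n. \<integral>y. interim n vbar f i (\<lambda>v. (Pp v i)\<^sup>2) y \<partial>prior vbar f i)"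
proof -
  assume g: "good Pp"
  have m2: "(\<lambda>v. \<Sum>i<n. (Pp v i)\<^sup>2) \<in> borel_measurable PM"
    by (intro borel_measurable_power borel_measurable_sum) (rule good_meas[OF g], auto)
  have "integral\<^sup>L PM (\<lambda>v. (\<Sum>i<n. Pp v i)\<^sup>2) = integral\<^sup>L PM (\<lambda>v. \<Sum>i<n. (Pp v i)\<^sup>2)"
    by (rule integral_cong_AE[OF good_R2_meas[OF g] m2 good_R2_eq[OF g]])
  also have "\<dots> = (\<Sum>i<n. integral\<^sup>L PM (\<lambda>v. (Pp v i)\<^sup>2))"
    by (rule Bochner_Integration.integral_sum[where f="\<lambda>i v. (Pp v i)\<^sup>2"]) (use good_int2[OF g] in auto)
  also have "\<dots> = (\<Sum>i<n. \<integral>y. interim n vbar f i (\<lambda>v. (Pp v i)\<^sup>2) y \<partial>prior vbar f i)"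
  proof (rule sum.cong[OF refl])
    fix i assume "i \<in> {..<n}" then have i: "i < n" by simp
    have m: "(\<lambda>v. (Pp v i)\<^sup>2) \<in> borel_measurable PM" using good_meas[OF g i] by measurable
    show "integral\<^sup>L PM (\<lambda>v. (Pp v i)\<^sup>2) = (\<integral>y. interim n vbar f i (\<lambda>v. (Pp v i)\<^sup>2) y \<partial>prior vbar f i)"
      by (rule decomp[OF i m, where B="(vbar i)\<^sup>2"]) (use good_bound[OF g _ i] in \<open>auto intro: power_mono\<close>)
  qed
  finally show ?thesis .
qed

lemma good_var: "good Pp \<Longrightarrow> revenue_variance n vbar f Pp =
    (\<Sum>i<n. \<integral>y. interim n vbar f i (\<lambda>v. (Pp v i)\<^sup>2) y \<partial>prior vbar f i) -
    (\<Sum>i<n. \<integral>y. interim n vbar f i (\<lambda>v. wpb n vbar f A v i) y \<partial>prior vbar f i)\<^sup>2"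
proof -
  assume g: "good Pp"
  interpret P: prob_space PM by (rule PM_prob)
  show ?thesis unfolding revenue_variance_def Let_def
    using P.variance_eq[OF good_intR[OF g] good_intR2[OF g]] good_ER[OF g] good_ER2[OF g] by simp
qed

lemma cs:
  assumes g: "good Pp" and i: "i < n" and y: "y \<in> {0..vbar i}"
  shows "interim n vbar f i (\<lambda>v. (wpb n vbar f A v i)\<^sup>2) y \<le> interim n vbar f i (\<lambda>v. (Pp v i)\<^sup>2) y"
proof -
  interpret O: prob_space "Oth i" by (rule Oth_prob)
  define h where "h = (\<lambda>w. Pp (w(i:=y)) i)"
  define a where "a = (\<lambda>w. A (w(i:=y)) i)"
  define c where "c = wpb_bid n vbar f A i y"
  have hm[measurable]: "h \<in> borel_measurable (Oth i)"
    unfolding h_def by (rule upd_comp[OF i good_meas[OF g i]])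
  have am[measurable]: "a \<in> borel_measurable (Oth i)"
    unfolding a_def by (rule upd_comp[OF i A_meas[OF i]])
  have a01: "a w = 0 \<or> a w = 1" for w unfolding a_def by (rule A01[OF i])
  have ae: "AE w in Oth i. 0 \<le> h w \<and> h w \<le> vbar i \<and> h w * a w = h w"
    using AE_types_upd[OF i y]
  proof eventually_elim
    case (elim w)
    show ?case using good_bound[OF g elim i] good_zero[OF g elim i] a01[of w]
      unfolding h_def a_def by auto
  qed
  have ih: "integrable (Oth i) h"
    by (rule O.integrable_const_bound[where B="vbar i"]) (use ae in \<open>auto elim: AE_mp\<close>)
  have ih2: "integrable (Oth i) (\<lambda>w. (h w)\<^sup>2)"
    by (rule O.integrable_const_bound[where B="(vbar i)\<^sup>2"])
       (use ae in \<open>auto elim!: AE_mp intro: power_mono\<close>)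
  have ia: "integrable (Oth i) a"
  proof (rule O.integrable_const_bound[where B=1])
    show "AE x in Oth i. norm (a x) \<le> 1"
    proof (rule AE_I2)
      fix w show "norm (a w) \<le> 1" using a01[of w] by auto
    qed
  qed (rule am)
  have iha: "integrable (Oth i) (\<lambda>w. h w * a w)"
    by (rule integrable_cong_AE[THEN iffD2, OF _ hm _ ih]) (use ae in \<open>auto elim: AE_mp\<close>)
  have Eh: "integral\<^sup>L (Oth i) h = interim_payment n vbar f A i y"
    using good_RE[OF g i y] by (simp add: interim_def h_def)
  have Ea: "integral\<^sup>L (Oth i) a = interim_alloc n vbar f A i y"
    by (simp add: interim_alloc_def interim_def a_def)
  have Eha: "integral\<^sup>L (Oth i) (\<lambda>w. h w * a w) = integral\<^sup>L (Oth i) h"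
    by (rule integral_cong_AE) (use ae in \<open>auto elim: AE_mp\<close>)
  have cx: "c * interim_alloc n vbar f A i y = interim_payment n vbar f A i y"
    unfolding c_def by (rule bid_eq[OF i y])
  have W: "interim n vbar f i (\<lambda>v. (wpb n vbar f A v i)\<^sup>2) y = c\<^sup>2 * interim_alloc n vbar f A i y"
  proof -
    have "interim n vbar f i (\<lambda>v. (wpb n vbar f A v i)\<^sup>2) y = (\<integral>w. c\<^sup>2 * a w \<partial>Oth i)"
      unfolding interim_def
      by (rule Bochner_Integration.integral_cong[OF refl])
         (use a01 in \<open>auto simp: wpb_def c_def a_def power2_eq_square\<close>)
    then show ?thesis using Ea by simp
  qed
  have P2: "interim n vbar f i (\<lambda>v. (Pp v i)\<^sup>2) y = integral\<^sup>L (Oth i) (\<lambda>w. (h w)\<^sup>2)"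
    by (simp add: interim_def h_def)
  have "(\<integral>w. (h w - c * a w)\<^sup>2 \<partial>Oth i) = (\<integral>w. ((h w)\<^sup>2 - (2 * c) * (h w * a w)) + c\<^sup>2 * a w \<partial>Oth i)"
    by (rule Bochner_Integration.integral_cong[OF refl])
       (use a01 in \<open>auto simp: power2_eq_square algebra_simps\<close>)
  also have "\<dots> = integral\<^sup>L (Oth i) (\<lambda>w. (h w)\<^sup>2) - 2 * c * integral\<^sup>L (Oth i) (\<lambda>w. h w * a w)
      + c\<^sup>2 * integral\<^sup>L (Oth i) a"
    using ih2 iha ia by (simp add: Bochner_Integration.integral_add Bochner_Integration.integral_diff)
  finally have E: "(\<integral>w. (h w - c * a w)\<^sup>2 \<partial>Oth i) = 
      integral\<^sup>L (Oth i) (\<lambda>w. (h w)\<^sup>2) - c\<^sup>2 * interim_alloc n vbar f A i y"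
    unfolding Eha Eh Ea cx[symmetric] by (simp add: power2_eq_square algebra_simps)
  have "0 \<le> (\<integral>w. (h w - c * a w)\<^sup>2 \<partial>Oth i)" by (rule integral_nonneg_AE) auto
  then show ?thesis unfolding W P2 E by simp
qed

lemma final:
  assumes g: "good Pp"
  shows "revenue_variance n vbar f (wpb n vbar f A) \<le> revenue_variance n vbar f Pp"
proof -
  have "(\<Sum>i<n. \<integral>y. interim n vbar f i (\<lambda>v. (wpb n vbar f A v i)\<^sup>2) y \<partial>prior vbar f i)
      \<le> (\<Sum>i<n. \<integral>y. interim n vbar f i (\<lambda>v. (Pp v i)\<^sup>2) y \<partial>prior vbar f i)"
  proof (rule sum_mono)
    fix i assume "i \<in> {..<n}" then have i: "i < n" by simp
    have m1: "(\<lambda>v. (wpb n vbar f A v i)\<^sup>2) \<in> borel_measurable PM"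
      using good_meas[OF good_wpb i] by measurable
    have m2: "(\<lambda>v. (Pp v i)\<^sup>2) \<in> borel_measurable PM"
      using good_meas[OF g i] by measurable
    show "(\<integral>y. interim n vbar f i (\<lambda>v. (wpb n vbar f A v i)\<^sup>2) y \<partial>prior vbar f i)
      \<le> (\<integral>y. interim n vbar f i (\<lambda>v. (Pp v i)\<^sup>2) y \<partial>prior vbar f i)"
    proof (rule integral_mono_AE)
      show "integrable (prior vbar f i) (interim n vbar f i (\<lambda>v. (wpb n vbar f A v i)\<^sup>2))"
        by (rule interim_int[OF i m1, where B="(vbar i)\<^sup>2"])
           (use good_bound[OF good_wpb _ i] in \<open>auto intro: power_mono\<close>)
      show "integrable (prior vbar f i) (interim n vbar f i (\<lambda>v. (Pp v i)\<^sup>2))"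
        by (rule interim_int[OF i m2, where B="(vbar i)\<^sup>2"])
           (use good_bound[OF g _ i] in \<open>auto intro: power_mono\<close>)
      show "AE y in prior vbar f i. interim n vbar f i (\<lambda>v. (wpb n vbar f A v i)\<^sup>2) y
          \<le> interim n vbar f i (\<lambda>v. (Pp v i)\<^sup>2) y"
        using AE_range[OF i] by eventually_elim (rule cs[OF g i])
    qed
  qed
  then show ?thesis unfolding good_var[OF g] good_var[OF good_wpb] by simp
qed

end

theorem mainTheorem3:
  fixes n :: nat and vbar :: "nat \<Rightarrow> real" and f :: "nat \<Rightarrow> real \<Rightarrow> real"
    and A :: "(nat \<Rightarrow> real) \<Rightarrow> nat \<Rightarrow> real"
  assumes "1 < n"
    and "valid_prior n vbar f"
    and "alloc_rule n 1 vbar f A"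
    and "implementable n vbar f A"
  shows "payment_rule n vbar f (wpb n vbar f A) \<and> implements n vbar f A (wpb n vbar f A) \<and>
         expost_IR n vbar A (wpb n vbar f A) \<and>
         (\<forall>P. payment_rule n vbar f P \<and> implements n vbar f A P \<and> expost_IR n vbar A P \<longrightarrow>
              revenue_variance n vbar f (wpb n vbar f A) \<le> revenue_variance n vbar f P)"
proof -
  interpret auc n vbar f A using assms by (rule auc.intro)
  show ?thesis using wpb_props final good_P by blast
qed

end
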